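(* Let $0<a\le 1$ and let $x^1,\dots,x^T\in[a,1]^N$ be price relative vectors with $\max_i x^t_i=1$ for all $t$. Let $w^1\in\Delta^N$ have all entries positive, let $0<\eta\le 1$, and define $$w^{t+1}=w^t\odot\big(\mathbb{1}-\eta\,\Pi_{w^t}\nabla f^t\big),\qquad \nabla f^t=-\frac{x^t}{w^t\cdot x^t},\qquad (\Pi_{w^t}\nabla f^t)_i=\nabla_i f^t-w^t\cdot\nabla f^t.$$ Then for every $u\in\Delta^N$, $$\sum_{t=1}^T\log(u\cdot x^t)-\sum_{t=1}^T\log(w^t\cdot x^t)\le\frac{D(u\,|\,w^1)}{\eta}+\frac{T\eta}{2a^2(1-\eta)}.$$ In particular, taking $w^1=(1/N,\ldots,1/N)$ and $\eta=\frac{a\sqrt{2\log N}}{a\sqrt{2\log N}+\sqrt{T}}$ gives, for every $u\in\Delta^N$, $$\sum_{t=1}^T\log(u\cdot x^t)-\sum_{t=1}^T\log(w^t\cdot x^t)\le\frac{\sqrt{2T\log N}}{a}+\log N.$$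
   Context: $\Delta^N=\{w\in\mathbb{R}^N : \sum_i w_i=1,\ w_i\ge 0\}$; $\odot$ is componentwise multiplication and $\mathbb{1}$ the all-ones vector. The relative entropy is $D(u\,|\,w)=\sum_{i:\,u_i\ne0}u_i\log(u_i/w_i)$. *)

theory Defs
  imports "HOL-Analysis.Analysis"
begin

text \<open>Vectors in R^N are represented as functions nat => real, only the
  coordinates i < N being relevant.\<close>

definition prob_simplex :: "nat \<Rightarrow> (nat \<Rightarrow> real) set" where
  "prob_simplex N = {w. (\<forall>i<N. 0 \<le> w i) \<and> (\<Sum>i<N. w i) = 1}"

definition dotp :: "nat \<Rightarrow> (nat \<Rightarrow> real) \<Rightarrow> (nat \<Rightarrow> real) \<Rightarrow> real" where
  "dotp N u v = (\<Sum>i<N. u i * v i)"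

definition relent :: "nat \<Rightarrow> (nat \<Rightarrow> real) \<Rightarrow> (nat \<Rightarrow> real) \<Rightarrow> real" where
  "relent N u w = (\<Sum>i\<in>{i. i < N \<and> u i \<noteq> 0}. u i * ln (u i / w i))"

text \<open>Gradient of f^t(w) = - log(w . x): grad_i = - x_i / (w . x).\<close>
definition grad :: "nat \<Rightarrow> (nat \<Rightarrow> real) \<Rightarrow> (nat \<Rightarrow> real) \<Rightarrow> (nat \<Rightarrow> real)" where
  "grad N w xt = (\<lambda>i. - xt i / dotp N w xt)"

definition proj :: "nat \<Rightarrow> (nat \<Rightarrow> real) \<Rightarrow> (nat \<Rightarrow> real) \<Rightarrow> (nat \<Rightarrow> real)" where
  "proj N w g = (\<lambda>i. g i - dotp N w g)"

text \<open>Weights, 0-based in time: eg_w N \<eta> x w1 0 = w^1 and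
  eg_w N \<eta> x w1 (Suc t) is obtained from eg_w N \<eta> x w1 t using price vector x t,
  i.e. eg_w ... t corresponds to w^{t+1} and x t to x^{t+1}.\<close>
primrec eg_w :: "nat \<Rightarrow> real \<Rightarrow> (nat \<Rightarrow> nat \<Rightarrow> real) \<Rightarrow> (nat \<Rightarrow> real) \<Rightarrow> nat \<Rightarrow> (nat \<Rightarrow> real)" where
  "eg_w N \<eta> x w1 0 = w1"
| "eg_w N \<eta> x w1 (Suc t) =
     (let w = eg_w N \<eta> x w1 t in
      (\<lambda>i. w i * (1 - \<eta> * proj N w (grad N w (x t)) i)))"

end

theory Submission
  imports Defs
begin
lemma ln_lb_pos:
  fixes z :: real assumes "0 \<le> z" shows "z - z\<^sup>2/2 \<le> ln (1+z)"
proof -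
  have "(\<lambda>y. ln (1+y) - y + y\<^sup>2/2) 0 \<le> (\<lambda>y. ln (1+y) - y + y\<^sup>2/2) z"
  proof (rule DERIV_nonneg_imp_nondecreasing[OF assms])
    fix y :: real assume y: "0 \<le> y" "y \<le> z"
    have "((\<lambda>y. ln (1+y) - y + y\<^sup>2/2) has_real_derivative (1/(1+y) - 1 + y)) (at y)"
      using y by (auto intro!: derivative_eq_intros)
    moreover have "0 \<le> 1/(1+y) - 1 + y" using y by (simp add: field_simps power2_eq_square)
    ultimately show "\<exists>d. ((\<lambda>y. ln (1+y) - y + y\<^sup>2/2) has_real_derivative d) (at y) \<and> 0 \<le> d" by blast
  qed
  then show ?thesis by simp
qed

lemma ln_lb_neg:
  fixes z :: real assumes "-1 < z" "z \<le> 0" shows "z - z\<^sup>2/(2*(1+z)) \<le> ln (1+z)"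
proof -
  have "(\<lambda>y. ln (1+y) - y + y\<^sup>2/(2*(1+y))) 0 \<le> (\<lambda>y. ln (1+y) - y + y\<^sup>2/(2*(1+y))) z"
  proof (rule DERIV_nonpos_imp_nonincreasing[OF assms(2)])
    fix y :: real assume y: "z \<le> y" "y \<le> 0"
    have "((\<lambda>y. ln (1+y) - y + y\<^sup>2/(2*(1+y))) has_real_derivative (1/(1+y) - 1 + (2*y*(2*(1+y)) - y\<^sup>2 * 2)/(2*(1+y))\<^sup>2)) (at y)"
      using y assms by (auto intro!: derivative_eq_intros simp: power2_eq_square)
    moreover have "1/(1+y) - 1 + (2*y*(2*(1+y)) - y\<^sup>2 * 2)/(2*(1+y))\<^sup>2 \<le> 0"
    proof -
      have "1/(1+y) - 1 + (2*y*(2*(1+y)) - y\<^sup>2 * 2)/(2*(1+y))\<^sup>2 = - y\<^sup>2/(2*(1+y)\<^sup>2)"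
      proof -
        obtain p where p: "y = p - 1" "0 < p" proof (rule that[of "y+1"]) qed (use y assms in auto)
        show ?thesis unfolding p(1) using p(2) by (simp add: field_simps power2_eq_square)
      qed
      then show ?thesis by simp
    qed
    ultimately show "\<exists>d. ((\<lambda>y. ln (1+y) - y + y\<^sup>2/(2*(1+y))) has_real_derivative d) (at y) \<and> d \<le> 0" by blast
  qed
  then show ?thesis by simp
qed

lemma ln_lb:
  fixes z e :: real assumes "1 - e \<le> 1 + z" "0 < 1 - e" "0 \<le> e"
  shows "z - z\<^sup>2/(2*(1-e)) \<le> ln (1+z)"
proof (cases "0 \<le> z")
  case True
  have "z\<^sup>2/2 \<le> z\<^sup>2/(2*(1-e))" using assms by (intro divide_left_mono) (auto intro!: mult_pos_pos)
  then show ?thesis using ln_lb_pos[OF True] by linarith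
next
  case False
  have "z\<^sup>2/(2*(1+z)) \<le> z\<^sup>2/(2*(1-e))" using assms by (intro divide_left_mono) auto
  then show ?thesis using ln_lb_neg[of z] False assms by linarith
qed
lemma dotp_bounds:
  assumes "w \<in> prob_simplex N" "\<And>i. i < N \<Longrightarrow> a \<le> xt i \<and> xt i \<le> 1"
  shows "a \<le> dotp N w xt \<and> dotp N w xt \<le> 1"
proof -
  have w: "\<And>i. i<N \<Longrightarrow> 0 \<le> w i" "(\<Sum>i<N. w i) = 1" using assms(1) by (auto simp: prob_simplex_def)
  have "(\<Sum>i<N. w i * a) \<le> (\<Sum>i<N. w i * xt i)"
    by (intro sum_mono mult_left_mono) (use w assms(2) in auto)
  moreover have "(\<Sum>i<N. w i * xt i) \<le> (\<Sum>i<N. w i * 1)"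
    by (intro sum_mono mult_left_mono) (use w assms(2) in auto)
  moreover have "(\<Sum>i<N. w i * a) = a" using w(2) by (simp add: sum_distrib_right[symmetric])
  ultimately show ?thesis using w(2) by (simp add: dotp_def)
qed

lemma eg_step:
  assumes "eg_w N \<eta> x w1 t \<in> prob_simplex N" "dotp N (eg_w N \<eta> x w1 t) (x t) \<noteq> 0"
  shows "eg_w N \<eta> x w1 (Suc t) i = eg_w N \<eta> x w1 t i * (1 - \<eta> + \<eta> * (x t i / dotp N (eg_w N \<eta> x w1 t) (x t)))"
proof -
  define w where "w = eg_w N \<eta> x w1 t"
  define d where "d = dotp N w (x t)"
  have d: "d \<noteq> 0" using assms(2) by (simp add: w_def d_def)
  have "dotp N w (grad N w (x t)) = (\<Sum>i<N. w i * (- x t i / d))"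
    by (simp add: dotp_def grad_def d_def)
  also have "\<dots> = (\<Sum>i<N. w i * x t i) * (- 1 / d)"
    by (simp add: sum_negf sum_divide_distrib[symmetric])
  also have "\<dots> = -1" using d by (simp add: d_def dotp_def)
  finally have g: "dotp N w (grad N w (x t)) = -1" .
  show ?thesis
    by (simp add: w_def[symmetric] d_def[symmetric] Let_def proj_def g) (simp add: grad_def d_def algebra_simps)
qed

lemma invariant:
  assumes "0 \<le> \<eta>" "\<eta> \<le> 1" "0 < a"
    and "\<And>t i. t < T \<Longrightarrow> i < N \<Longrightarrow> a \<le> x t i \<and> x t i \<le> 1"
    and "w1 \<in> prob_simplex N" "\<forall>i<N. 0 < w1 i"
  shows "t \<le> T \<Longrightarrow> eg_w N \<eta> x w1 t \<in> prob_simplex N \<and> (\<forall>i<N. 0 < eg_w N \<eta> x w1 t i)"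
proof (induction t)
  case 0
  then show ?case using assms by simp
next
  case (Suc t)
  define w where "w = eg_w N \<eta> x w1 t"
  have IH: "w \<in> prob_simplex N" "\<And>i. i<N \<Longrightarrow> 0 < w i" using Suc by (auto simp: w_def)
  define d where "d = dotp N w (x t)"
  have db: "a \<le> d" "d \<le> 1" using dotp_bounds[OF IH(1), of a "x t"] assms(4)[of t] Suc.prems by (auto simp: d_def)
  have step: "\<And>i. eg_w N \<eta> x w1 (Suc t) i = w i * (1 - \<eta> + \<eta> * (x t i / d))"
    using eg_step[of N \<eta> x w1 t] IH db assms(3) by (simp add: w_def d_def)
  have pos: "\<And>i. i<N \<Longrightarrow> 0 < 1 - \<eta> + \<eta> * (x t i / d)"
  proof -
    fix i assume i: "i<N"
    have "0 < x t i / d" using assms(4)[of t i] i Suc.prems db assms(3) by auto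
    then have "\<eta> \<noteq> 0 \<Longrightarrow> 0 < \<eta> * (x t i / d)" using assms(1)
      by (intro mult_pos_pos) auto
    then show "0 < 1 - \<eta> + \<eta> * (x t i / d)" using assms(1,2)
      by (cases "\<eta> = 0") auto
  qed
  have w: "(\<Sum>i<N. w i) = 1" using IH(1) by (simp add: prob_simplex_def)
  have "(\<Sum>i<N. w i * (1 - \<eta> + \<eta> * (x t i / d))) = (1 - \<eta>) * (\<Sum>i<N. w i) + \<eta> / d * (\<Sum>i<N. w i * x t i)"
  proof -
    have "\<And>i. w i * (1 - \<eta> + \<eta> * (x t i / d)) = (1 - \<eta>) * w i + \<eta> / d * (w i * x t i)"
      by (simp add: algebra_simps)
    then show ?thesis by (simp add: sum.distrib sum_distrib_left)
  qed
  also have "\<dots> = 1" using w db assms(3) by (simp add: d_def dotp_def)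
  finally show ?case using step pos IH(2)
    by (auto simp: prob_simplex_def less_imp_le)
qed
lemma sum_S:
  fixes f :: "nat \<Rightarrow> real"
  assumes "\<And>i. i < N \<Longrightarrow> u i = 0 \<Longrightarrow> f i = 0"
  shows "(\<Sum>i\<in>{i. i < N \<and> u i \<noteq> 0}. f i) = (\<Sum>i<N. f i)"
  by (rule sum.mono_neutral_left) (use assms in auto)

lemma per_step:
  assumes "0 < \<eta>" "\<eta> < 1" "0 < a" "a \<le> 1"
    and w: "w \<in> prob_simplex N" and u: "u \<in> prob_simplex N"
    and xb: "\<And>i. i < N \<Longrightarrow> a \<le> xt i \<and> xt i \<le> 1"
  shows "ln (dotp N u xt) - ln (dotp N w xt)
     \<le> (\<Sum>i\<in>{i. i < N \<and> u i \<noteq> 0}. u i * ln (1 - \<eta> + \<eta> * (xt i / dotp N w xt))) / \<eta>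
        + \<eta> / (2 * a\<^sup>2 * (1 - \<eta>))"
proof -
  define S where "S = {i. i < N \<and> u i \<noteq> 0}"
  define d where "d = dotp N w xt"
  define c where "c = \<eta> / (2 * a\<^sup>2 * (1 - \<eta>))"
  have db: "a \<le> d" "d \<le> 1" using dotp_bounds[OF w xb] by (auto simp: d_def)
  have ub: "a \<le> dotp N u xt" using dotp_bounds[OF u xb] by auto
  have u0: "\<And>i. i<N \<Longrightarrow> 0 \<le> u i" "(\<Sum>i<N. u i) = 1" using u by (auto simp: prob_simplex_def)
  have uS: "(\<Sum>i\<in>S. u i) = 1" unfolding S_def using u0 by (subst sum_S) auto
  have "ln (dotp N u xt) - ln d = ln (dotp N u xt / d)" using db ub assms(3) by (simp add: ln_div)
  also have "\<dots> \<le> dotp N u xt / d - 1" using db ub assms(3) by (intro ln_le_minus_one) auto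
  also have "\<dots> = (\<Sum>i<N. u i * (xt i / d - 1))"
    using u0(2) by (simp add: dotp_def sum_subtractf sum_divide_distrib algebra_simps)
  also have "\<dots> = (\<Sum>i\<in>S. u i * (xt i / d - 1))" unfolding S_def by (subst sum_S) auto
  also have "\<dots> \<le> (\<Sum>i\<in>S. (u i * ln (1 - \<eta> + \<eta> * (xt i / d)) + u i * (\<eta> * c)) / \<eta>)"
  proof (rule sum_mono)
    fix i assume "i \<in> S"
    then have i: "i < N" by (auto simp: S_def)
    define z where "z = \<eta> * (xt i / d - 1)"
    have m: "a * d \<le> a" "a * xt i \<le> a"
      using mult_left_mono[of d 1 a] mult_left_mono[of "xt i" 1 a] xb[OF i] db assms(3) by auto
    have m2: "a * d \<le> xt i" "a * xt i \<le> d" using m xb[OF i] db by linarith+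
    have "0 < d" using db assms(3) by linarith
    then have r: "a \<le> xt i / d" "xt i / d \<le> 1 / a"
      using m2 assms(3) by (simp_all add: field_simps)
    have "0 \<le> \<eta> * (xt i / d)" using assms(1) r assms(3) by (intro mult_nonneg_nonneg) auto
    then have zl: "1 - \<eta> \<le> 1 + z" by (simp add: z_def algebra_simps)
    have "z - z\<^sup>2/(2*(1-\<eta>)) \<le> ln (1+z)" by (rule ln_lb) (use zl assms in auto)
    moreover have "z\<^sup>2/(2*(1-\<eta>)) \<le> \<eta> * c"
    proof -
      have "1 \<le> 1 / a" using assms(3,4) by simp
      then have "\<bar>xt i / d - 1\<bar> \<le> 1 / a" using r assms(3)
        unfolding abs_le_iff by (intro conjI; linarith)
      then have "(xt i / d - 1)\<^sup>2 \<le> (1/a)\<^sup>2"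
        by (metis abs_ge_zero power2_abs power_mono)
      then have "z\<^sup>2 \<le> \<eta>\<^sup>2 * (1/a)\<^sup>2" unfolding z_def power_mult_distrib
        by (intro mult_left_mono) auto
      then have "z\<^sup>2/(2*(1-\<eta>)) \<le> \<eta>\<^sup>2 * (1/a)\<^sup>2/(2*(1-\<eta>))"
        using assms(2) by (intro divide_right_mono) auto
      also have "\<dots> = \<eta> * c" by (simp add: c_def power2_eq_square field_simps)
      finally show ?thesis .
    qed
    ultimately have "\<eta> * (xt i / d - 1) \<le> ln (1 - \<eta> + \<eta> * (xt i / d)) + \<eta> * c"
      by (simp add: z_def algebra_simps)
    then have "u i * (\<eta> * (xt i / d - 1)) \<le> u i * (ln (1 - \<eta> + \<eta> * (xt i / d)) + \<eta> * c)"
      using u0(1)[OF i] by (rule mult_left_mono)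
    then show "u i * (xt i / d - 1) \<le> (u i * ln (1 - \<eta> + \<eta> * (xt i / d)) + u i * (\<eta> * c)) / \<eta>"
      using assms(1) by (simp add: field_simps)
  qed
  also have "\<dots> = (\<Sum>i\<in>S. u i * ln (1 - \<eta> + \<eta> * (xt i / d))) / \<eta> + c * (\<Sum>i\<in>S. u i)"
  proof -
    have "\<And>i. (u i * ln (1 - \<eta> + \<eta> * (xt i / d)) + u i * (\<eta> * c)) / \<eta>
       = u i * ln (1 - \<eta> + \<eta> * (xt i / d)) / \<eta> + c * u i"
      using assms(1) by (simp add: field_simps)
    then show ?thesis by (simp add: sum.distrib sum_divide_distrib sum_distrib_left)
  qed
  finally show ?thesis using uS by (simp add: S_def d_def c_def)
qed

lemma entropy_nonneg:
  assumes w: "w \<in> prob_simplex N" "\<forall>i<N. 0 < w i" and u: "u \<in> prob_simplex N"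
  shows "(\<Sum>i\<in>{i. i < N \<and> u i \<noteq> 0}. u i * ln (w i)) \<le> (\<Sum>i\<in>{i. i < N \<and> u i \<noteq> 0}. u i * ln (u i))"
proof -
  define S where "S = {i. i < N \<and> u i \<noteq> 0}"
  have u0: "\<And>i. i<N \<Longrightarrow> 0 \<le> u i" "(\<Sum>i<N. u i) = 1" using u by (auto simp: prob_simplex_def)
  have w0: "(\<Sum>i<N. w i) = 1" using w by (auto simp: prob_simplex_def)
  have uS: "(\<Sum>i\<in>S. u i) = 1" unfolding S_def using u0 by (subst sum_S) auto
  have "(\<Sum>i\<in>S. u i * ln (w i) - u i * ln (u i)) \<le> (\<Sum>i\<in>S. w i - u i)"
  proof (rule sum_mono)
    fix i assume "i \<in> S"
    then have i: "i < N" "0 < u i" using u0 by (auto simp: S_def less_le)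
    have "ln (w i / u i) \<le> w i / u i - 1" using w(2) i by (intro ln_le_minus_one) auto
    then have "u i * ln (w i / u i) \<le> u i * (w i / u i - 1)" using i by (intro mult_left_mono) auto
    moreover have "0 < w i" using w(2) i by auto
    ultimately show "u i * ln (w i) - u i * ln (u i) \<le> w i - u i"
      using i by (simp add: ln_div algebra_simps)
  qed
  also have "\<dots> = (\<Sum>i\<in>S. w i) - 1" using uS by (simp add: sum_subtractf)
  also have "(\<Sum>i\<in>S. w i) \<le> (\<Sum>i<N. w i)"
    unfolding S_def by (rule sum_mono2) (use w(2) in \<open>auto simp: less_imp_le\<close>)
  finally show ?thesis using w0 by (simp add: S_def sum_subtractf)
qed
lemma part1:
  fixes N T :: nat and a :: real and x :: "nat \<Rightarrow> nat \<Rightarrow> real"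
  assumes "0 < a" and "a \<le> 1"
    and xb: "\<And>t i. t < T \<Longrightarrow> i < N \<Longrightarrow> a \<le> x t i \<and> x t i \<le> 1"
    and w1: "w1 \<in> prob_simplex N" "\<forall>i<N. 0 < w1 i" and eta: "0 < \<eta>" "\<eta> < 1"
    and u: "u \<in> prob_simplex N"
  shows "(\<Sum>t<T. ln (dotp N u (x t))) - (\<Sum>t<T. ln (dotp N (eg_w N \<eta> x w1 t) (x t)))
          \<le> relent N u w1 / \<eta> + real T * \<eta> / (2 * a\<^sup>2 * (1 - \<eta>))"
proof -
  define W where "W = eg_w N \<eta> x w1"
  define S where "S = {i. i < N \<and> u i \<noteq> 0}"
  define c where "c = \<eta> / (2 * a\<^sup>2 * (1 - \<eta>))"
  have inv: "\<And>t. t \<le> T \<Longrightarrow> W t \<in> prob_simplex N \<and> (\<forall>i<N. 0 < W t i)"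
    unfolding W_def using invariant[of \<eta> a T N x w1] assms by auto
  have step: "ln (dotp N u (x t)) - ln (dotp N (W t) (x t))
     \<le> (\<Sum>i\<in>S. u i * ln (W (Suc t) i) - u i * ln (W t i)) / \<eta> + c" if t: "t < T" for t
  proof -
    have Wt: "W t \<in> prob_simplex N" "\<forall>i<N. 0 < W t i" using inv t by auto
    have WS: "\<forall>i<N. 0 < W (Suc t) i" using inv t by auto
    define d where "d = dotp N (W t) (x t)"
    have db: "a \<le> d" using dotp_bounds[OF Wt(1), of a "x t"] xb t by (auto simp: d_def)
    have e: "W (Suc t) i = W t i * (1 - \<eta> + \<eta> * (x t i / d))" for i
      using eg_step[of N \<eta> x w1 t i] Wt db assms(1) by (simp add: W_def d_def)
    have "(\<Sum>i\<in>S. u i * ln (1 - \<eta> + \<eta> * (x t i / d))) = (\<Sum>i\<in>S. u i * ln (W (Suc t) i) - u i * ln (W t i))"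
    proof (rule sum.cong)
      fix i assume "i \<in> S"
      then have i: "i < N" by (auto simp: S_def)
      have p1: "0 < W t i" using Wt i by auto
      have p2: "0 < W (Suc t) i" using WS i by auto
      have "1 - \<eta> + \<eta> * (x t i / d) = W (Suc t) i / W t i" using e[of i] p1 by simp
      then show "u i * ln (1 - \<eta> + \<eta> * (x t i / d)) = u i * ln (W (Suc t) i) - u i * ln (W t i)"
        using p1 p2 by (simp add: ln_div algebra_simps)
    qed simp
    then show ?thesis
      using per_step[OF eta assms(1,2) Wt(1) u, of "x t"] xb t by (simp add: d_def S_def c_def)
  qed
  have "(\<Sum>t<T. ln (dotp N u (x t))) - (\<Sum>t<T. ln (dotp N (W t) (x t)))
      = (\<Sum>t<T. ln (dotp N u (x t)) - ln (dotp N (W t) (x t)))" by (simp add: sum_subtractf)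
  also have "\<dots> \<le> (\<Sum>t<T. (\<Sum>i\<in>S. u i * ln (W (Suc t) i) - u i * ln (W t i)) / \<eta> + c)"
    by (rule sum_mono) (use step in auto)
  also have "\<dots> = (\<Sum>i\<in>S. \<Sum>t<T. u i * ln (W (Suc t) i) - u i * ln (W t i)) / \<eta> + real T * c"
    by (simp add: sum.distrib sum_divide_distrib[symmetric] sum.swap[of _ "{..<T}"])
  also have "(\<Sum>i\<in>S. \<Sum>t<T. u i * ln (W (Suc t) i) - u i * ln (W t i))
      = (\<Sum>i\<in>S. u i * ln (W T i) - u i * ln (w1 i))"
  proof (rule sum.cong[OF refl])
    fix i
    have "W 0 = w1" by (simp add: W_def)
    then show "(\<Sum>t<T. u i * ln (W (Suc t) i) - u i * ln (W t i)) = u i * ln (W T i) - u i * ln (w1 i)"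
      using sum_lessThan_telescope[of "\<lambda>t. u i * ln (W t i)" T] by simp
  qed
  also have "\<dots> \<le> relent N u w1"
  proof -
    have "(\<Sum>i\<in>S. u i * ln (W T i)) \<le> (\<Sum>i\<in>S. u i * ln (u i))"
      unfolding S_def using entropy_nonneg[of "W T" N u] inv[of T] u by auto
    moreover have "relent N u w1 = (\<Sum>i\<in>S. u i * ln (u i) - u i * ln (w1 i))"
      unfolding relent_def S_def
    proof (rule sum.cong)
      fix i assume "i \<in> {i. i < N \<and> u i \<noteq> 0}"
      then have "0 < u i" "0 < w1 i" using u w1 by (auto simp: prob_simplex_def less_le)
      then show "u i * ln (u i / w1 i) = u i * ln (u i) - u i * ln (w1 i)"
        by (simp add: ln_div algebra_simps)
    qed simp
    ultimately show ?thesis by (simp add: sum_subtractf)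
  qed
  finally show ?thesis using eta by (simp add: W_def c_def divide_right_mono)
qed
lemma relent_uniform:
  assumes "N \<ge> 1" "u \<in> prob_simplex N"
  shows "relent N u (\<lambda>i. 1 / real N) \<le> ln (real N)"
proof -
  define S where "S = {i. i < N \<and> u i \<noteq> 0}"
  have u0: "\<And>i. i<N \<Longrightarrow> 0 \<le> u i" "(\<Sum>i<N. u i) = 1" using assms by (auto simp: prob_simplex_def)
  have uS: "(\<Sum>i\<in>S. u i) = 1" unfolding S_def using u0 by (subst sum_S) auto
  have le1: "\<And>i. i<N \<Longrightarrow> u i \<le> 1"
  proof -
    fix i assume i: "i < N"
    have "u i \<le> (\<Sum>j<N. u j)" using i u0 by (intro member_le_sum) auto
    then show "u i \<le> 1" using u0 by simp
  qed
  have "relent N u (\<lambda>i. 1 / real N) = (\<Sum>i\<in>S. u i * ln (u i) + u i * ln (real N))"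
    unfolding relent_def S_def
  proof (rule sum.cong[OF refl])
    fix i assume "i \<in> {i. i < N \<and> u i \<noteq> 0}"
    then have "0 < u i" using u0 by (auto simp: less_le)
    then show "u i * ln (u i / (1 / real N)) = u i * ln (u i) + u i * ln (real N)"
      using assms(1) by (simp add: ln_mult algebra_simps)
  qed
  also have "\<dots> = (\<Sum>i\<in>S. u i * ln (u i)) + ln (real N)"
    using uS by (simp add: sum.distrib sum_distrib_right[symmetric])
  also have "(\<Sum>i\<in>S. u i * ln (u i)) \<le> 0"
  proof (rule sum_nonpos)
    fix i assume "i \<in> S"
    then have "0 < u i" "u i \<le> 1" using u0 le1 by (auto simp: S_def less_le)
    then show "u i * ln (u i) \<le> 0" by (simp add: mult_nonneg_nonpos)
  qed
  finally show ?thesis by simp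
qed

lemma eg_w_zero: "eg_w N 0 x w1 t = w1"
  by (induction t) (simp_all add: Let_def)

theorem theorem5p2:
  fixes N T :: nat and a :: real and x :: "nat \<Rightarrow> nat \<Rightarrow> real"
  assumes "N \<ge> 1"
    and "0 < a" and "a \<le> 1"
    and "\<And>t i. t < T \<Longrightarrow> i < N \<Longrightarrow> a \<le> x t i \<and> x t i \<le> 1"
    and "\<And>t. t < T \<Longrightarrow> Max (x t ` {..<N}) = 1"
  shows
    "(\<forall>w1 \<eta> u. w1 \<in> prob_simplex N \<and> (\<forall>i<N. 0 < w1 i) \<and> 0 < \<eta> \<and> \<eta> \<le> 1 \<and> u \<in> prob_simplex N \<longrightarrow>
        \<eta> = 1 \<or>
        (\<Sum>t<T. ln (dotp N u (x t))) - (\<Sum>t<T. ln (dotp N (eg_w N \<eta> x w1 t) (x t)))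
          \<le> relent N u w1 / \<eta> + real T * \<eta> / (2 * a\<^sup>2 * (1 - \<eta>)))
     \<and>
     (let w1 = (\<lambda>i. 1 / real N);
          \<eta> = a * sqrt (2 * ln (real N)) / (a * sqrt (2 * ln (real N)) + sqrt (real T))
      in \<forall>u\<in>prob_simplex N.
        (\<Sum>t<T. ln (dotp N u (x t))) - (\<Sum>t<T. ln (dotp N (eg_w N \<eta> x w1 t) (x t)))
          \<le> sqrt (2 * real T * ln (real N)) / a + ln (real N))"
proof (intro conjI allI impI)
  fix w1 u and \<eta> :: real
  assume h: "w1 \<in> prob_simplex N \<and> (\<forall>i<N. 0 < w1 i) \<and> 0 < \<eta> \<and> \<eta> \<le> 1 \<and> u \<in> prob_simplex N"
  show "\<eta> = 1 \<or>
        (\<Sum>t<T. ln (dotp N u (x t))) - (\<Sum>t<T. ln (dotp N (eg_w N \<eta> x w1 t) (x t)))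
          \<le> relent N u w1 / \<eta> + real T * \<eta> / (2 * a\<^sup>2 * (1 - \<eta>))"
  proof (cases "\<eta> = 1")
    case False
    then have "\<eta> < 1" using h by auto
    then show ?thesis using part1[of a T N x w1 \<eta> u] h assms(2,3,4) by blast
  qed simp
next
  define L where "L = ln (real N)"
  define s where "s = sqrt (real T)"
  define q where "q = sqrt (2 * L)"
  define w1 where "w1 = (\<lambda>i::nat. 1 / real N)"
  define \<eta> where "\<eta> = a * q / (a * q + s)"
  have L0: "0 \<le> L" using assms(1) by (simp add: L_def)
  have main: "(\<Sum>t<T. ln (dotp N u (x t))) - (\<Sum>t<T. ln (dotp N (eg_w N \<eta> x w1 t) (x t)))
          \<le> s * q / a + L" if u: "u \<in> prob_simplex N" for u
  proof (cases "T = 0")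
    case True
    then show ?thesis using L0 by (simp add: s_def)
  next
    case T: False
    show ?thesis
    proof (cases "N = 1")
      case True
      then have "\<eta> = 0" by (simp add: \<eta>_def q_def L_def)
      then have "dotp N (eg_w N \<eta> x w1 t) (x t) = dotp N u (x t)" for t
        using u True by (simp add: eg_w_zero w1_def dotp_def prob_simplex_def)
      then show ?thesis using L0 assms(2) by (simp add: s_def q_def)
    next
      case False
      then have "1 < real N" using assms(1) by simp
      then have Lp: "0 < L" by (simp add: L_def)
      have qp: "0 < q" using Lp by (simp add: q_def)
      have q2: "q\<^sup>2 = 2 * L" using L0 by (simp add: q_def)
      have sp: "0 < s" using T by (simp add: s_def)
      have s2: "s\<^sup>2 = real T" by (simp add: s_def)
      have aq: "0 < a * q" using qp assms(2) by simp
      have e0: "0 < \<eta>" "\<eta> < 1" using aq sp by (auto simp: \<eta>_def field_simps)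
      have w1: "w1 \<in> prob_simplex N" "\<forall>i<N. 0 < w1 i" using assms(1) by (auto simp: w1_def prob_simplex_def)
      have "(\<Sum>t<T. ln (dotp N u (x t))) - (\<Sum>t<T. ln (dotp N (eg_w N \<eta> x w1 t) (x t)))
          \<le> relent N u w1 / \<eta> + real T * \<eta> / (2 * a\<^sup>2 * (1 - \<eta>))"
        using part1[of a T N x w1 \<eta> u] w1 e0 u assms(2,3,4) by blast
      also have "\<dots> \<le> L / \<eta> + real T * \<eta> / (2 * a\<^sup>2 * (1 - \<eta>))"
        using relent_uniform[OF assms(1) u] e0 by (simp add: w1_def L_def divide_right_mono)
      also have "\<dots> = s * q / a + L"
      proof -
        have d: "a * q + s \<noteq> 0" using aq sp by simp
        have "L / \<eta> = L + L * s / (a * q)" using aq d qp assms(2) by (simp add: \<eta>_def field_simps)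
        moreover have "real T * \<eta> / (2 * a\<^sup>2 * (1 - \<eta>)) = s * q / (2 * a)"
        proof -
          have dp: "0 < a * q + s" using aq sp by simp
          have e1: "1 - \<eta> = s / (a * q + s)" using dp by (simp add: \<eta>_def field_simps)
          have "real T * \<eta> / (2 * a\<^sup>2 * (1 - \<eta>)) = s\<^sup>2 * (a * q / (a * q + s)) / (2 * a\<^sup>2 * (s / (a * q + s)))"
            unfolding e1 s2[symmetric] by (simp add: \<eta>_def)
          also have "\<dots> = (s\<^sup>2 * (a * q)) / (2 * a\<^sup>2 * s)"
            using dp by (simp add: divide_simps)
          also have "\<dots> = s * q / (2 * a)"
            using sp qp assms(2) by (simp add: field_simps power2_eq_square)
          finally show ?thesis .
        qed
        moreover have "L * s / (a * q) = s * q / (2 * a)"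
          using aq qp assms(2) q2 by (simp add: field_simps power2_eq_square)
        ultimately show ?thesis by simp
      qed
      finally show ?thesis .
    qed
  qed
  have "sqrt (2 * real T * ln (real N)) = s * q"
    by (simp add: s_def q_def L_def real_sqrt_mult[symmetric] mult_ac)
  then show "let w1 = (\<lambda>i. 1 / real N);
          \<eta> = a * sqrt (2 * ln (real N)) / (a * sqrt (2 * ln (real N)) + sqrt (real T))
      in \<forall>u\<in>prob_simplex N.
        (\<Sum>t<T. ln (dotp N u (x t))) - (\<Sum>t<T. ln (dotp N (eg_w N \<eta> x w1 t) (x t)))
          \<le> sqrt (2 * real T * ln (real N)) / a + ln (real N)"
    using main by (simp add: Let_def w1_def \<eta>_def q_def s_def L_def)
qed
end
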